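(* Let $\Gamma$ be a graph and let $K$ be a finite graph. (1) If $\Gamma$ contains a finite set of vertices $X$ such that every subgraph of $\Gamma$ isomorphic to $K$ has at least one vertex in $X$, then $\Gamma$ contains a finite set of vertices $Y$, invariant under all automorphisms of $\Gamma$, such that every subgraph of $\Gamma$ isomorphic to $K$ has at least one vertex in $Y$, and $|Y|\le |X|\cdot(\text{number of vertices of }K)$. (2) If $\Gamma$ contains a finite set of edges $X$ such that every subgraph of $\Gamma$ isomorphic to $K$ has at least one edge in $X$, then $\Gamma$ contains a finite set of edges $Y$, invariant under all automorphisms of $\Gamma$, such that every subgraph of $\Gamma$ isomorphic to $K$ has at least one edge in $Y$, and $|Y|\le |X|\cdot(\text{number of edges of }K)$.
   Context: "Graph" may be understood in any of the usual senses (directed, undirected, or mixed; multiple edges and/or loops allowed or not), fixed throughout; isomorphisms and automorphisms preserve the corresponding structure (e.g. edge directions for directed graphs). "Subgraph" means an arbitrary (not necessarily induced) subgraph. $\Gamma$ may be infinite. *)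

theory Defs
  imports Main
begin

text \<open>Convention: a graph is a directed graph without multiple edges, loops allowed,
  given by a (possibly infinite) vertex set and an arc relation on it.\<close>

record 'a graph =
  verts :: "'a set"
  arcs  :: "('a \<times> 'a) set"

definition wf_graph :: "'a graph \<Rightarrow> bool" where
  "wf_graph G \<longleftrightarrow> arcs G \<subseteq> verts G \<times> verts G"

definition finite_graph :: "'a graph \<Rightarrow> bool" where
  "finite_graph G \<longleftrightarrow> wf_graph G \<and> finite (verts G)"

definition subgraph :: "'a graph \<Rightarrow> 'a graph \<Rightarrow> bool" where
  "subgraph H G \<longleftrightarrow> wf_graph H \<and> verts H \<subseteq> verts G \<and> arcs H \<subseteq> arcs G"

definition graph_iso :: "('b \<Rightarrow> 'a) \<Rightarrow> 'b graph \<Rightarrow> 'a graph \<Rightarrow> bool" where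
  "graph_iso f K H \<longleftrightarrow> bij_betw f (verts K) (verts H) \<and>
     (\<forall>u\<in>verts K. \<forall>v\<in>verts K. (u, v) \<in> arcs K \<longleftrightarrow> (f u, f v) \<in> arcs H)"

definition isomorphic :: "'b graph \<Rightarrow> 'a graph \<Rightarrow> bool" where
  "isomorphic K H \<longleftrightarrow> (\<exists>f. graph_iso f K H)"

definition automorphism :: "('a \<Rightarrow> 'a) \<Rightarrow> 'a graph \<Rightarrow> bool" where
  "automorphism f G \<longleftrightarrow> graph_iso f G G"

definition arc_map :: "('a \<Rightarrow> 'b) \<Rightarrow> 'a \<times> 'a \<Rightarrow> 'b \<times> 'b" where
  "arc_map f e = (f (fst e), f (snd e))"

definition vertex_set_invariant :: "'a graph \<Rightarrow> 'a set \<Rightarrow> bool" where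
  "vertex_set_invariant G Y \<longleftrightarrow> (\<forall>f. automorphism f G \<longrightarrow> f ` Y = Y)"

definition arc_set_invariant :: "'a graph \<Rightarrow> ('a \<times> 'a) set \<Rightarrow> bool" where
  "arc_set_invariant G Y \<longleftrightarrow> (\<forall>f. automorphism f G \<longrightarrow> arc_map f ` Y = Y)"

end

theory Submission
  imports Defs
begin

lemma abstract_hitting:
  fixes F :: "'v set set" and V :: "'v set" and P :: "('v \<Rightarrow> 'v) \<Rightarrow> bool" and m :: nat
  assumes fin: "\<forall>S\<in>F. finite S \<and> card S \<le> m"
    and XV: "X \<subseteq> V" and Xfin: "finite X" and Xhit: "\<forall>S\<in>F. S \<inter> X \<noteq> {}"
    and inj: "\<forall>\<sigma>. P \<sigma> \<longrightarrow> inj_on \<sigma> V \<and> \<sigma> ` V \<subseteq> V"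
    and pre: "\<forall>\<sigma> S. P \<sigma> \<and> S \<in> F \<longrightarrow> (\<exists>S'\<in>F. \<sigma> ` S' = S)"
  shows "\<exists>Y. Y \<subseteq> V \<and> finite Y \<and> (\<forall>\<sigma>. P \<sigma> \<longrightarrow> \<sigma> ` Y = Y) \<and> (\<forall>S\<in>F. S \<inter> Y \<noteq> {}) \<and> card Y \<le> card X * m"
proof -
  define tr where "tr T \<longleftrightarrow> T \<subseteq> V \<and> finite T \<and> (\<forall>S\<in>F. S \<inter> T \<noteq> {})" for T
  define \<tau> where "\<tau> = (LEAST n. \<exists>T. tr T \<and> card T = n)"
  have trX: "tr X" using XV Xfin Xhit by (simp add: tr_def)
  have ex: "\<exists>T. tr T \<and> card T = \<tau>" unfolding \<tau>_def
    by (rule LeastI_ex) (use trX in blast)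
  then obtain T0 where T0: "tr T0" "card T0 = \<tau>" by blast
  have tauX: "\<tau> \<le> card X" unfolding \<tau>_def by (rule Least_le) (use trX in blast)
  have tau_le: "\<tau> \<le> card T" if "tr T" for T unfolding \<tau>_def by (rule Least_le) (use that in blast)
  define M where "M = {T. tr T \<and> card T = \<tau>}"
  have minimal: "T' = T" if "T \<in> M" "T' \<subseteq> T" "tr T'" for T T'
  proof -
    have "finite T" using that by (simp add: M_def tr_def)
    moreover have "card T \<le> card T'" using tau_le[OF that(3)] that(1) by (simp add: M_def)
    ultimately show ?thesis using that(2) by (metis card_seteq)
  qed
  have finM_gen: "finite {T\<in>M. A \<subseteq> T \<and> card (T - A) \<le> j}" if "finite A" for j A
    using that
  proof (induction j arbitrary: A)
    case 0
    have "{T\<in>M. A \<subseteq> T \<and> card (T - A) \<le> 0} \<subseteq> {A}"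
    proof
      fix T assume T: "T \<in> {T\<in>M. A \<subseteq> T \<and> card (T - A) \<le> 0}"
      then have "finite T" by (simp add: M_def tr_def)
      with T show "T \<in> {A}" by auto
    qed
    then show ?case by (rule finite_subset) simp
  next
    case (Suc j)
    show ?case
    proof (cases "\<forall>S\<in>F. S \<inter> A \<noteq> {}")
      case True
      have "{T\<in>M. A \<subseteq> T \<and> card (T - A) \<le> Suc j} \<subseteq> {A}"
      proof
        fix T assume T: "T \<in> {T\<in>M. A \<subseteq> T \<and> card (T - A) \<le> Suc j}"
        then have "A \<subseteq> V" by (auto simp: M_def tr_def)
        then have "tr A" using True Suc.prems by (simp add: tr_def)
        then show "T \<in> {A}" using minimal T by auto
      qed
      then show ?thesis by (rule finite_subset) simp
    next
      case False
      then obtain S where S: "S \<in> F" "S \<inter> A = {}" by blast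
      have "{T\<in>M. A \<subseteq> T \<and> card (T - A) \<le> Suc j} \<subseteq>
            (\<Union>s\<in>S. {T\<in>M. insert s A \<subseteq> T \<and> card (T - insert s A) \<le> j})"
      proof
        fix T assume T: "T \<in> {T\<in>M. A \<subseteq> T \<and> card (T - A) \<le> Suc j}"
        then have trT: "tr T" by (simp add: M_def)
        then obtain s where s: "s \<in> S" "s \<in> T" using S unfolding tr_def by blast
        have "finite T" using trT by (simp add: tr_def)
        have "T - insert s A = (T - A) - {s}" by auto
        moreover have "s \<in> T - A" using s S by auto
        ultimately have "card (T - insert s A) = card (T - A) - 1"
          using \<open>finite T\<close> by simp
        then show "T \<in> (\<Union>s\<in>S. {T\<in>M. insert s A \<subseteq> T \<and> card (T - insert s A) \<le> j})"
          using T s by auto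
      qed
      moreover have "finite (\<Union>s\<in>S. {T\<in>M. insert s A \<subseteq> T \<and> card (T - insert s A) \<le> j})"
      proof (rule finite_UN_I)
        show "finite S" using fin S by auto
        fix s assume "s \<in> S"
        show "finite {T\<in>M. insert s A \<subseteq> T \<and> card (T - insert s A) \<le> j}"
          using Suc.IH[of "insert s A"] Suc.prems by simp
      qed
      ultimately show ?thesis by (rule finite_subset)
    qed
  qed
  have "M = {T\<in>M. {} \<subseteq> T \<and> card (T - {}) \<le> \<tau>}" by (auto simp: M_def)
  then have finM: "finite M" using finM_gen[of "{}" \<tau>] by simp
  define U where "U = \<Union>M"
  have finU: "finite U" unfolding U_def using finM by (auto simp: M_def tr_def)
  have UV: "U \<subseteq> V" unfolding U_def by (auto simp: M_def tr_def)
  define N where "N = card M"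
  have T0M: "T0 \<in> M" using T0 by (simp add: M_def)
  have Npos: "N > 0" unfolding N_def using finM T0M card_gt_0_iff by blast
  define w where "w y = card {T\<in>M. y \<in> T}" for y
  have w_alt: "w y = (\<Sum>T\<in>M. if y \<in> T then 1 else 0)" for y
    unfolding w_def using finM by (simp add: sum.inter_filter[symmetric])
  have wpos: "y \<in> U" if "w y > 0" for y
  proof -
    have "{T\<in>M. y \<in> T} \<noteq> {}" using that unfolding w_def by (metis card.empty less_irrefl)
    then show ?thesis unfolding U_def by blast
  qed
  have perm: "(\<lambda>T. \<sigma> ` T) ` M = M" and winv: "\<forall>y\<in>V. w (\<sigma> y) = w y" if P: "P \<sigma>" for \<sigma>
  proof -
    have injs: "inj_on \<sigma> V" and sV: "\<sigma> ` V \<subseteq> V" using inj P by auto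
    have into: "\<sigma> ` T \<in> M" if "T \<in> M" for T
    proof -
      have TV: "T \<subseteq> V" "finite T" "card T = \<tau>" using that by (auto simp: M_def tr_def)
      have "card (\<sigma> ` T) = card T" using injs TV by (meson card_image inj_on_subset)
      moreover have "\<sigma> ` T \<subseteq> V" using TV sV by auto
      moreover have "S \<inter> \<sigma> ` T \<noteq> {}" if "S \<in> F" for S
      proof -
        obtain S' where "S' \<in> F" "\<sigma> ` S' = S" using pre P \<open>S \<in> F\<close> by blast
        moreover obtain y where "y \<in> S'" "y \<in> T" using \<open>S' \<in> F\<close> \<open>T \<in> M\<close> by (auto simp: M_def tr_def)
        ultimately show ?thesis by auto
      qed
      ultimately show ?thesis using TV by (simp add: M_def tr_def)
    qed
    have injM: "inj_on (\<lambda>T. \<sigma> ` T) M"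
    proof (rule inj_onI)
      fix T1 T2 assume "T1 \<in> M" "T2 \<in> M" "\<sigma> ` T1 = \<sigma> ` T2"
      moreover have "T1 \<subseteq> V" "T2 \<subseteq> V" using \<open>T1 \<in> M\<close> \<open>T2 \<in> M\<close> by (auto simp: M_def tr_def)
      ultimately show "T1 = T2" using injs by (simp add: inj_on_image_eq_iff)
    qed
    have "(\<lambda>T. \<sigma> ` T) ` M \<subseteq> M" using into by auto
    moreover have "card ((\<lambda>T. \<sigma> ` T) ` M) = card M" using injM card_image by blast
    ultimately show permM: "(\<lambda>T. \<sigma> ` T) ` M = M" using finM by (metis card_subset_eq)
    show "\<forall>y\<in>V. w (\<sigma> y) = w y"
    proof
      fix y assume yV: "y \<in> V"
      have eq: "{T\<in>M. \<sigma> y \<in> T} = (\<lambda>T. \<sigma> ` T) ` {T\<in>M. y \<in> T}"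
      proof
        show "(\<lambda>T. \<sigma> ` T) ` {T\<in>M. y \<in> T} \<subseteq> {T\<in>M. \<sigma> y \<in> T}" using into by auto
        show "{T\<in>M. \<sigma> y \<in> T} \<subseteq> (\<lambda>T. \<sigma> ` T) ` {T\<in>M. y \<in> T}"
        proof
          fix T assume T: "T \<in> {T\<in>M. \<sigma> y \<in> T}"
          then obtain T' where T': "T' \<in> M" "T = \<sigma> ` T'" using permM by blast
          then have "T' \<subseteq> V" by (auto simp: M_def tr_def)
          then have "y \<in> T'" using T T' yV injs by (auto simp: inj_on_image_mem_iff)
          then show "T \<in> (\<lambda>T. \<sigma> ` T) ` {T\<in>M. y \<in> T}" using T' by auto
        qed
      qed
      have "inj_on (\<lambda>T. \<sigma> ` T) {T\<in>M. y \<in> T}" using injM by (rule inj_on_subset) auto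
      then show "w (\<sigma> y) = w y" unfolding w_def eq by (rule card_image)
    qed
  qed
  define Y where "Y = {y\<in>U. N \<le> m * w y}"
  have finY: "finite Y" using finU by (simp add: Y_def)
  have YV: "Y \<subseteq> V" using UV by (auto simp: Y_def)
  have inv: "\<sigma> ` Y = Y" if P: "P \<sigma>" for \<sigma>
  proof -
    have injs: "inj_on \<sigma> V" using inj P by auto
    have sub: "\<sigma> ` Y \<subseteq> Y"
    proof
      fix z assume "z \<in> \<sigma> ` Y"
      then obtain y where y: "y \<in> Y" "z = \<sigma> y" by blast
      then have "y \<in> V" using YV by auto
      then have "w z = w y" using winv[OF P] y by simp
      moreover have "w y > 0" using y Npos by (auto simp: Y_def intro: gr0I)
      ultimately show "z \<in> Y" using y wpos by (simp add: Y_def) 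
    qed
    have "card (\<sigma> ` Y) = card Y" using injs YV by (meson card_image inj_on_subset)
    then show ?thesis using sub finY by (metis card_subset_eq)
  qed
  have hit: "S \<inter> Y \<noteq> {}" if S: "S \<in> F" for S
  proof
    assume dis: "S \<inter> Y = {}"
    have finS: "finite S" and cS: "card S \<le> m" using fin S by auto
    have Sne: "S \<noteq> {}" using T0 S by (auto simp: tr_def)
    have "(\<Sum>y\<in>S. w y) = (\<Sum>T\<in>M. \<Sum>y\<in>S. if y \<in> T then 1 else 0)"
      unfolding w_alt by (rule sum.swap)
    also have "\<dots> = (\<Sum>T\<in>M. card (S \<inter> T))"
      using finS by (simp add: sum.If_cases)
    also have "\<dots> \<ge> (\<Sum>T\<in>M. 1)"
    proof (rule sum_mono)
      fix T assume "T \<in> M"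
      then have "S \<inter> T \<noteq> {}" "finite T" using S by (auto simp: M_def tr_def)
      then show "1 \<le> card (S \<inter> T)" by (simp add: Suc_le_eq card_gt_0_iff)
    qed
    finally have ge: "N \<le> (\<Sum>y\<in>S. w y)" by (simp add: N_def)
    have lt: "m * w y < N" if "y \<in> S" for y
    proof (cases "y \<in> U")
      case True then show ?thesis using dis that by (auto simp: Y_def)
    next
      case False then show ?thesis using wpos Npos by (cases "w y") auto
    qed
    have "m * N \<le> m * (\<Sum>y\<in>S. w y)" using ge by simp
    also have "\<dots> = (\<Sum>y\<in>S. m * w y)" by (simp add: sum_distrib_left)
    also have "\<dots> < (\<Sum>y\<in>S. N)" using lt finS Sne by (intro sum_strict_mono) auto
    also have "\<dots> = card S * N" by simp
    also have "\<dots> \<le> m * N" using cS by simp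
    finally show False by simp
  qed
  have "card Y * N = (\<Sum>y\<in>Y. N)" by simp
  also have "\<dots> \<le> (\<Sum>y\<in>Y. m * w y)" by (rule sum_mono) (simp add: Y_def)
  also have "\<dots> \<le> (\<Sum>y\<in>U. m * w y)" using finU by (intro sum_mono2) (auto simp: Y_def)
  also have "\<dots> = m * (\<Sum>y\<in>U. w y)" by (simp add: sum_distrib_left)
  also have "(\<Sum>y\<in>U. w y) = (\<Sum>T\<in>M. \<Sum>y\<in>U. if y \<in> T then 1 else 0)"
    unfolding w_alt by (rule sum.swap)
  also have "\<dots> = (\<Sum>T\<in>M. card (U \<inter> T))"
    using finU by (simp add: sum.If_cases)
  also have "\<dots> = (\<Sum>T\<in>M. \<tau>)"
  proof (rule sum.cong)
    fix T assume "T \<in> M"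
    then have "U \<inter> T = T" "card T = \<tau>" by (auto simp: U_def M_def)
    then show "card (U \<inter> T) = \<tau>" by simp
  qed simp
  also have "\<dots> = N * \<tau>" by (simp add: N_def)
  finally have "card Y * N \<le> m * (N * \<tau>)" .
  then have "card Y * N \<le> (m * \<tau>) * N" by (simp add: ac_simps)
  then have "card Y \<le> m * \<tau>" using Npos by (meson mult_le_cancel2)
  also have "\<dots> \<le> card X * m" using tauX by (simp add: mult.commute)
  finally have cY: "card Y \<le> card X * m" .
  show ?thesis
    by (rule exI[of _ Y]) (use finY YV inv hit cY in auto)
qed

lemma aut_inj: assumes "automorphism f G" shows "inj_on f (verts G)" "f ` verts G = verts G"
  using assms by (auto simp: automorphism_def graph_iso_def bij_betw_def)

lemma arc_map_inj:
  assumes "inj_on f A" "B \<subseteq> A \<times> A" shows "inj_on (arc_map f) B"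
proof (rule inj_onI)
  fix x y assume "x \<in> B" "y \<in> B" "arc_map f x = arc_map f y"
  with assms show "x = y" by (cases x; cases y) (auto simp: arc_map_def dest: inj_onD)
qed

lemma aut_inv:
  assumes "automorphism f G"
  shows "automorphism (inv_into (verts G) f) G"
proof -
  let ?g = "inv_into (verts G) f"
  have bf: "bij_betw f (verts G) (verts G)" and ar: "\<forall>u\<in>verts G. \<forall>v\<in>verts G. (u, v) \<in> arcs G \<longleftrightarrow> (f u, f v) \<in> arcs G"
    using assms by (auto simp: automorphism_def graph_iso_def)
  have bg: "bij_betw ?g (verts G) (verts G)" using bf by (rule bij_betw_inv_into)
  have fg: "f (?g x) = x" if "x \<in> verts G" for x
    using that bf by (simp add: bij_betw_def f_inv_into_f)
  have gV: "?g x \<in> verts G" if "x \<in> verts G" for x using bg that by (auto simp: bij_betw_def)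
  have "(u, v) \<in> arcs G \<longleftrightarrow> (?g u, ?g v) \<in> arcs G" if "u \<in> verts G" "v \<in> verts G" for u v
    using ar[rule_format, OF gV[OF that(1)] gV[OF that(2)]] fg that by simp
  then show ?thesis using bg by (auto simp: automorphism_def graph_iso_def)
qed

definition img_graph :: "('a \<Rightarrow> 'a) \<Rightarrow> 'a graph \<Rightarrow> 'a graph" where
  "img_graph f H = \<lparr>verts = f ` verts H, arcs = arc_map f ` arcs H\<rparr>"

lemma img_copy:
  assumes wf: "wf_graph G" and f: "automorphism f G" and H: "subgraph H G" and KH: "isomorphic K H"
  shows "subgraph (img_graph f H) G" "isomorphic K (img_graph f H)"
proof -
  have bf: "bij_betw f (verts G) (verts G)" and ar: "\<forall>u\<in>verts G. \<forall>v\<in>verts G. (u, v) \<in> arcs G \<longleftrightarrow> (f u, f v) \<in> arcs G"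
    using f by (auto simp: automorphism_def graph_iso_def)
  have HV: "verts H \<subseteq> verts G" "arcs H \<subseteq> arcs G" "arcs H \<subseteq> verts H \<times> verts H"
    using H by (auto simp: subgraph_def wf_graph_def)
  have injf: "inj_on f (verts G)" and fV: "f ` verts G = verts G" using bf by (auto simp: bij_betw_def)
  show "subgraph (img_graph f H) G"
    unfolding subgraph_def wf_graph_def img_graph_def
  proof (intro conjI)
    show "arcs \<lparr>verts = f ` verts H, arcs = arc_map f ` arcs H\<rparr>
      \<subseteq> verts \<lparr>verts = f ` verts H, arcs = arc_map f ` arcs H\<rparr> \<times> verts \<lparr>verts = f ` verts H, arcs = arc_map f ` arcs H\<rparr>"
      using HV(3) by (auto simp: arc_map_def)
    show "verts \<lparr>verts = f ` verts H, arcs = arc_map f ` arcs H\<rparr> \<subseteq> verts G" using HV fV by force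
    show "arcs \<lparr>verts = f ` verts H, arcs = arc_map f ` arcs H\<rparr> \<subseteq> arcs G"
    proof
      fix e assume "e \<in> arcs \<lparr>verts = f ` verts H, arcs = arc_map f ` arcs H\<rparr>"
      then obtain a b where ab: "(a, b) \<in> arcs H" "e = (f a, f b)" by (auto simp: arc_map_def)
      then have "a \<in> verts G" "b \<in> verts G" "(a,b) \<in> arcs G" using HV by auto
      then show "e \<in> arcs G" using ar ab by auto
    qed
  qed
  obtain g where g: "graph_iso g K H" using KH by (auto simp: isomorphic_def)
  have bg: "bij_betw g (verts K) (verts H)" and arg: "\<forall>u\<in>verts K. \<forall>v\<in>verts K. (u, v) \<in> arcs K \<longleftrightarrow> (g u, g v) \<in> arcs H"
    using g by (auto simp: graph_iso_def)
  have injH: "inj_on f (verts H)" using injf HV(1) by (rule inj_on_subset)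
  have "bij_betw (f \<circ> g) (verts K) (f ` verts H)"
    using bg injH by (meson bij_betw_imageI bij_betw_trans)
  moreover have "(u, v) \<in> arcs K \<longleftrightarrow> ((f \<circ> g) u, (f \<circ> g) v) \<in> arc_map f ` arcs H"
    if "u \<in> verts K" "v \<in> verts K" for u v
  proof -
    have gu: "g u \<in> verts H" "g v \<in> verts H" using bg that by (auto simp: bij_betw_def)
    have "((f \<circ> g) u, (f \<circ> g) v) \<in> arc_map f ` arcs H \<longleftrightarrow> (g u, g v) \<in> arcs H"
    proof
      assume "((f \<circ> g) u, (f \<circ> g) v) \<in> arc_map f ` arcs H"
      then obtain a b where "(a,b) \<in> arcs H" "f (g u) = f a" "f (g v) = f b" by (auto simp: arc_map_def)
      moreover then have "a \<in> verts H" "b \<in> verts H" using HV by auto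
      ultimately show "(g u, g v) \<in> arcs H" using injH gu by (metis inj_onD)
    next
      assume "(g u, g v) \<in> arcs H"
      then show "((f \<circ> g) u, (f \<circ> g) v) \<in> arc_map f ` arcs H"
        by (auto simp: arc_map_def image_iff intro!: bexI[of _ "(g u, g v)"])
    qed
    then show ?thesis using arg that by simp
  qed
  ultimately show "isomorphic K (img_graph f H)"
    unfolding isomorphic_def graph_iso_def img_graph_def by (intro exI[of _ "f \<circ> g"]) simp
qed

lemma copy_card:
  assumes K: "finite_graph K" and H: "subgraph H G" and KH: "isomorphic K H"
  shows "finite (verts H)" "card (verts H) = card (verts K)"
        "finite (arcs H)" "card (arcs H) = card (arcs K)"
proof -
  obtain g where g: "graph_iso g K H" using KH by (auto simp: isomorphic_def)
  have bg: "bij_betw g (verts K) (verts H)" and arg: "\<forall>u\<in>verts K. \<forall>v\<in>verts K. (u, v) \<in> arcs K \<longleftrightarrow> (g u, g v) \<in> arcs H"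
    using g by (auto simp: graph_iso_def)
  have fK: "finite (verts K)" and aK: "arcs K \<subseteq> verts K \<times> verts K"
    using K by (auto simp: finite_graph_def wf_graph_def)
  have aH: "arcs H \<subseteq> verts H \<times> verts H" using H by (auto simp: subgraph_def wf_graph_def)
  show "card (verts H) = card (verts K)" using bg by (simp add: bij_betw_same_card)
  show fH: "finite (verts H)" using bg fK bij_betw_finite by blast
  have eq: "arcs H = arc_map g ` arcs K"
  proof
    show "arc_map g ` arcs K \<subseteq> arcs H" using arg aK by (auto simp: arc_map_def)
    show "arcs H \<subseteq> arc_map g ` arcs K"
    proof
      fix e assume e: "e \<in> arcs H"
      then obtain a b where ab: "e = (a,b)" "a \<in> verts H" "b \<in> verts H" using aH by auto
      have "a \<in> g ` verts K" "b \<in> g ` verts K" using ab bg by (auto simp: bij_betw_def)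
      then obtain u v where uv: "u \<in> verts K" "v \<in> verts K" "a = g u" "b = g v"
        by blast
      then have "(u,v) \<in> arcs K" using arg e ab by auto
      then show "e \<in> arc_map g ` arcs K" using ab uv by (auto simp: arc_map_def image_iff intro!: bexI[of _ "(u,v)"])
    qed
  qed
  have "inj_on (arc_map g) (arcs K)" using bg aK by (intro arc_map_inj[of g "verts K"]) (auto simp: bij_betw_def)
  then show "card (arcs H) = card (arcs K)" using eq by (simp add: card_image)
  have "finite (arcs K)" using aK fK by (meson finite_SigmaI finite_subset)
  then show "finite (arcs H)" using eq by simp
qed

theorem corollary1:
  fixes \<Gamma> :: "'a graph" and K :: "'b graph"
  assumes "wf_graph \<Gamma>" and "finite_graph K"
  shows "(\<forall>X. X \<subseteq> verts \<Gamma> \<and> finite X \<and>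
            (\<forall>H. subgraph H \<Gamma> \<and> isomorphic K H \<longrightarrow> verts H \<inter> X \<noteq> {}) \<longrightarrow>
          (\<exists>Y. Y \<subseteq> verts \<Gamma> \<and> finite Y \<and> vertex_set_invariant \<Gamma> Y \<and>
            (\<forall>H. subgraph H \<Gamma> \<and> isomorphic K H \<longrightarrow> verts H \<inter> Y \<noteq> {}) \<and>
            card Y \<le> card X * card (verts K)))
    \<and> (\<forall>X. X \<subseteq> arcs \<Gamma> \<and> finite X \<and>
            (\<forall>H. subgraph H \<Gamma> \<and> isomorphic K H \<longrightarrow> arcs H \<inter> X \<noteq> {}) \<longrightarrow>
          (\<exists>Y. Y \<subseteq> arcs \<Gamma> \<and> finite Y \<and> arc_set_invariant \<Gamma> Y \<and>
            (\<forall>H. subgraph H \<Gamma> \<and> isomorphic K H \<longrightarrow> arcs H \<inter> Y \<noteq> {}) \<and>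
            card Y \<le> card X * card (arcs K)))"
proof (intro conjI allI impI)
  note wf = assms(1) and Kf = assms(2)
  have aG: "arcs \<Gamma> \<subseteq> verts \<Gamma> \<times> verts \<Gamma>" using wf by (simp add: wf_graph_def)
  fix X assume X: "X \<subseteq> verts \<Gamma> \<and> finite X \<and>
            (\<forall>H. subgraph H \<Gamma> \<and> isomorphic K H \<longrightarrow> verts H \<inter> X \<noteq> {})"
  define F where "F = {verts H | H. subgraph H \<Gamma> \<and> isomorphic K H}"
  have "\<exists>Y. Y \<subseteq> verts \<Gamma> \<and> finite Y \<and> (\<forall>\<sigma>. automorphism \<sigma> \<Gamma> \<longrightarrow> \<sigma> ` Y = Y) \<and> (\<forall>S\<in>F. S \<inter> Y \<noteq> {})
     \<and> card Y \<le> card X * card (verts K)"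
  proof (rule abstract_hitting)
    show "\<forall>S\<in>F. finite S \<and> card S \<le> card (verts K)"
    proof
      fix S assume "S \<in> F"
      then obtain H where H: "S = verts H" "subgraph H \<Gamma>" "isomorphic K H" by (auto simp: F_def)
      then show "finite S \<and> card S \<le> card (verts K)" using copy_card[OF Kf H(2,3)] by simp
    qed
    show "X \<subseteq> verts \<Gamma>" "finite X" "\<forall>S\<in>F. S \<inter> X \<noteq> {}" using X by (auto simp: F_def)
    show "\<forall>\<sigma>. automorphism \<sigma> \<Gamma> \<longrightarrow> inj_on \<sigma> (verts \<Gamma>) \<and> \<sigma> ` verts \<Gamma> \<subseteq> verts \<Gamma>"
      using aut_inj by blast
    show "\<forall>\<sigma> S. automorphism \<sigma> \<Gamma> \<and> S \<in> F \<longrightarrow> (\<exists>S'\<in>F. \<sigma> ` S' = S)"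
    proof (intro allI impI)
      fix \<sigma> S assume a: "automorphism \<sigma> \<Gamma> \<and> S \<in> F"
      then obtain H where H: "S = verts H" "subgraph H \<Gamma>" "isomorphic K H" by (auto simp: F_def)
      let ?g = "inv_into (verts \<Gamma>) \<sigma>"
      have g: "automorphism ?g \<Gamma>" using a aut_inv by blast
      have "subgraph (img_graph ?g H) \<Gamma>" "isomorphic K (img_graph ?g H)"
        using img_copy[OF wf g H(2,3)] by simp_all
      then have "verts (img_graph ?g H) \<in> F" unfolding F_def by blast
      moreover have "\<sigma> ` verts (img_graph ?g H) = S"
      proof -
        have "verts H \<subseteq> verts \<Gamma>" using H by (simp add: subgraph_def)
        moreover have "\<sigma> (?g x) = x" if "x \<in> verts \<Gamma>" for x
          using aut_inj(2)[of \<sigma> \<Gamma>] a that by (simp add: f_inv_into_f)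
        ultimately have "\<forall>x\<in>verts H. \<sigma> (?g x) = x" by blast
        then have "(\<lambda>x. \<sigma> (?g x)) ` verts H = (\<lambda>x. x) ` verts H" by (intro image_cong) auto
        then show ?thesis using H(1) by (simp add: img_graph_def image_image)
      qed
      ultimately show "\<exists>S'\<in>F. \<sigma> ` S' = S" by (rule bexI[rotated])
    qed
  qed
  then obtain Y where Y: "Y \<subseteq> verts \<Gamma> \<and> finite Y \<and> (\<forall>\<sigma>. automorphism \<sigma> \<Gamma> \<longrightarrow> \<sigma> ` Y = Y) \<and> (\<forall>S\<in>F. S \<inter> Y \<noteq> {})
     \<and> card Y \<le> card X * card (verts K)" ..
  have Y1: "Y \<subseteq> verts \<Gamma>" and Y2: "finite Y" and Y3: "\<forall>\<sigma>. automorphism \<sigma> \<Gamma> \<longrightarrow> \<sigma> ` Y = Y"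
    and Y4: "\<forall>S\<in>F. S \<inter> Y \<noteq> {}" and Y5: "card Y \<le> card X * card (verts K)"
    using Y by simp_all
  have Y6: "\<forall>H. subgraph H \<Gamma> \<and> isomorphic K H \<longrightarrow> verts H \<inter> Y \<noteq> {}"
  proof (intro allI impI)
    fix H assume "subgraph H \<Gamma> \<and> isomorphic K H"
    then have "verts H \<in> F" unfolding F_def by blast
    then show "verts H \<inter> Y \<noteq> {}" using Y4 by simp
  qed
  have Y7: "vertex_set_invariant \<Gamma> Y" unfolding vertex_set_invariant_def
  proof (intro allI impI)
    fix f assume "automorphism f \<Gamma>"
    then show "f ` Y = Y" using Y3  by simp
  qed
  show "\<exists>Y. Y \<subseteq> verts \<Gamma> \<and> finite Y \<and> vertex_set_invariant \<Gamma> Y \<and>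
            (\<forall>H. subgraph H \<Gamma> \<and> isomorphic K H \<longrightarrow> verts H \<inter> Y \<noteq> {}) \<and>
            card Y \<le> card X * card (verts K)"
    by (rule exI[of _ Y]) (intro conjI Y1 Y2 Y5 Y6 Y7)
next
  note wf = assms(1) and Kf = assms(2)
  have aG: "arcs \<Gamma> \<subseteq> verts \<Gamma> \<times> verts \<Gamma>" using wf by (simp add: wf_graph_def)
  fix X assume X: "X \<subseteq> arcs \<Gamma> \<and> finite X \<and>
            (\<forall>H. subgraph H \<Gamma> \<and> isomorphic K H \<longrightarrow> arcs H \<inter> X \<noteq> {})"
  define F where "F = {arcs H | H. subgraph H \<Gamma> \<and> isomorphic K H}"
  define P where "P \<sigma> \<longleftrightarrow> (\<exists>f. automorphism f \<Gamma> \<and> \<sigma> = arc_map f)" for \<sigma>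
  have "\<exists>Y. Y \<subseteq> arcs \<Gamma> \<and> finite Y \<and> (\<forall>\<sigma>. P \<sigma> \<longrightarrow> \<sigma> ` Y = Y) \<and> (\<forall>S\<in>F. S \<inter> Y \<noteq> {})
     \<and> card Y \<le> card X * card (arcs K)"
  proof (rule abstract_hitting)
    show "\<forall>S\<in>F. finite S \<and> card S \<le> card (arcs K)"
    proof
      fix S assume "S \<in> F"
      then obtain H where H: "S = arcs H" "subgraph H \<Gamma>" "isomorphic K H" by (auto simp: F_def)
      then show "finite S \<and> card S \<le> card (arcs K)" using copy_card[OF Kf H(2,3)] by simp
    qed
    show "X \<subseteq> arcs \<Gamma>" "finite X" "\<forall>S\<in>F. S \<inter> X \<noteq> {}" using X by (auto simp: F_def)
    show "\<forall>\<sigma>. P \<sigma> \<longrightarrow> inj_on \<sigma> (arcs \<Gamma>) \<and> \<sigma> ` arcs \<Gamma> \<subseteq> arcs \<Gamma>"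
    proof (intro allI impI conjI)
      fix \<sigma> assume "P \<sigma>"
      then obtain f where f: "automorphism f \<Gamma>" "\<sigma> = arc_map f" by (auto simp: P_def)
      show "inj_on \<sigma> (arcs \<Gamma>)" using f aut_inj(1)[OF f(1)] aG by (simp add: arc_map_inj)
      have "subgraph \<Gamma> \<Gamma>" using wf by (simp add: subgraph_def)
      moreover have "isomorphic \<Gamma> \<Gamma>"
        unfolding isomorphic_def graph_iso_def by (intro exI[of _ id]) simp
      ultimately have "subgraph (img_graph f \<Gamma>) \<Gamma>" using img_copy[OF wf f(1)] by blast
      then show "\<sigma> ` arcs \<Gamma> \<subseteq> arcs \<Gamma>" using f by (simp add: subgraph_def img_graph_def)
    qed
    show "\<forall>\<sigma> S. P \<sigma> \<and> S \<in> F \<longrightarrow> (\<exists>S'\<in>F. \<sigma> ` S' = S)"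
    proof (intro allI impI)
      fix \<sigma> S assume a: "P \<sigma> \<and> S \<in> F"
      then obtain f where f: "automorphism f \<Gamma>" "\<sigma> = arc_map f" by (auto simp: P_def)
      obtain H where H: "S = arcs H" "subgraph H \<Gamma>" "isomorphic K H" using a by (auto simp: F_def)
      let ?g = "inv_into (verts \<Gamma>) f"
      have g: "automorphism ?g \<Gamma>" using f aut_inv by blast
      have "subgraph (img_graph ?g H) \<Gamma>" "isomorphic K (img_graph ?g H)"
        using img_copy[OF wf g H(2,3)] by simp_all
      then have "arcs (img_graph ?g H) \<in> F" unfolding F_def by blast
      moreover have "\<sigma> ` arcs (img_graph ?g H) = S"
      proof -
        have "arcs H \<subseteq> verts \<Gamma> \<times> verts \<Gamma>" using H aG by (auto simp: subgraph_def)
        moreover have fg: "f (?g x) = x" if "x \<in> verts \<Gamma>" for x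
          using aut_inj(2)[OF f(1)] that by (simp add: f_inv_into_f)
        ultimately have "arc_map f (arc_map ?g e) = e" if "e \<in> arcs H" for e
          using that by (cases e) (auto simp: arc_map_def)
        then have "(\<lambda>e. arc_map f (arc_map ?g e)) ` arcs H = (\<lambda>e. e) ` arcs H" by (intro image_cong) auto
        then show ?thesis using H(1) f(2) by (simp add: img_graph_def image_image)
      qed
      ultimately show "\<exists>S'\<in>F. \<sigma> ` S' = S" by (rule bexI[rotated])
    qed
  qed
  then obtain Y where Y: "Y \<subseteq> arcs \<Gamma> \<and> finite Y \<and> (\<forall>\<sigma>. P \<sigma> \<longrightarrow> \<sigma> ` Y = Y) \<and> (\<forall>S\<in>F. S \<inter> Y \<noteq> {})
     \<and> card Y \<le> card X * card (arcs K)" ..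
  have Y1: "Y \<subseteq> arcs \<Gamma>" and Y2: "finite Y" and Y3: "\<forall>\<sigma>. P \<sigma> \<longrightarrow> \<sigma> ` Y = Y"
    and Y4: "\<forall>S\<in>F. S \<inter> Y \<noteq> {}" and Y5: "card Y \<le> card X * card (arcs K)"
    using Y by simp_all
  have Y6: "\<forall>H. subgraph H \<Gamma> \<and> isomorphic K H \<longrightarrow> arcs H \<inter> Y \<noteq> {}"
  proof (intro allI impI)
    fix H assume "subgraph H \<Gamma> \<and> isomorphic K H"
    then have "arcs H \<in> F" unfolding F_def by blast
    then show "arcs H \<inter> Y \<noteq> {}" using Y4 by simp
  qed
  have Y7: "arc_set_invariant \<Gamma> Y" unfolding arc_set_invariant_def
  proof (intro allI impI)
    fix f assume "automorphism f \<Gamma>"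
    then have "P (arc_map f)" unfolding P_def by blast
    then show "arc_map f ` Y = Y" using Y3 by simp
  qed
  show "\<exists>Y. Y \<subseteq> arcs \<Gamma> \<and> finite Y \<and> arc_set_invariant \<Gamma> Y \<and>
            (\<forall>H. subgraph H \<Gamma> \<and> isomorphic K H \<longrightarrow> arcs H \<inter> Y \<noteq> {}) \<and>
            card Y \<le> card X * card (arcs K)"
    by (rule exI[of _ Y]) (intro conjI Y1 Y2 Y5 Y6 Y7)
qed

end
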